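(* Consider a sequence of problems indexed by $n$ with a fixed integer $m\ge1$, a support set $\mathcal{S}\subseteq\{1,\dots,n\}$ of size $s=s(n)$, a fixed rate $\theta_1>0$ and a rate $\theta_0=\theta_0(n)>\theta_1$. Observations of component $i$ are i.i.d. $\mathrm{Poisson}(\theta_0)$ if $i\notin\mathcal{S}$ and i.i.d. $\mathrm{Poisson}(\theta_1)$ if $i\in\mathcal{S}$, independent across components and draws. Run (reversed) sequential thresholding with $K=(1+\epsilon)\log_2 n$ passes, $\epsilon>0$: set $\mathcal{S}_0=\{1,\dots,n\}$; for $k=1,\dots,K$, for each $i\in\mathcal{S}_{k-1}$ take $m$ fresh observations, compute $T^{(k)}_{i,m}=\sum_{j=1}^m y^{(k)}_{i,j}$, and set $\mathcal{S}_k=\{i\in\mathcal{S}_{k-1}:T^{(k)}_{i,m}<\mathrm{median}(\mathrm{Poisson}(m\theta_0))\}$. If $\theta_0>\frac{\log(s\log_2 n)+1}{m}$, then sequential thresholding is reliable, i.e. $\lim_{n\to\infty}\mathbb{P}(\mathcal{S}_K\neq\mathcal{S})=0$.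
   Context: A support estimator $\widehat{\mathcal{S}}(n)$ is reliable if $\lim_{n\to\infty}\mathbb{P}(\widehat{\mathcal{S}}(n)\neq\mathcal{S}(n))=0$. The inequality on $\theta_0$ is understood as a condition on the growth of $\theta_0(n)$ with $n$. *)

theory Defs
  imports "HOL-Probability.Probability"
begin

definition poisson_median :: "real \<Rightarrow> nat" where
  "poisson_median r = (LEAST M::nat. measure_pmf.prob (poisson_pmf r) {..M} \<ge> 1/2)"

text \<open>Observations: y (k, i, j) is the j-th observation of component i in pass k.
  Sequential thresholding: S_0 = {1..n}, and
  S_k = {i \<in> S_(k-1). (\<Sum>j=1..m. y(k,i,j)) < thr}.\<close>
fun seq_thresh :: "nat \<Rightarrow> nat \<Rightarrow> nat \<Rightarrow> (nat \<times> nat \<times> nat \<Rightarrow> nat) \<Rightarrow> nat \<Rightarrow> nat set" where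
  "seq_thresh n m thr y 0 = {1..n}"
| "seq_thresh n m thr y (Suc k) =
     {i \<in> seq_thresh n m thr y k. (\<Sum>j=1..m. y (Suc k, i, j)) < thr}"

definition obs_pmf ::
  "nat \<Rightarrow> nat \<Rightarrow> nat \<Rightarrow> nat set \<Rightarrow> real \<Rightarrow> real \<Rightarrow> (nat \<times> nat \<times> nat \<Rightarrow> nat) pmf" where
  "obs_pmf n m K S theta0 theta1 =
     Pi_pmf ({1..K} \<times> {1..n} \<times> {1..m}) 0
       (\<lambda>(k, i, j). poisson_pmf (if i \<in> S then theta1 else theta0))"

end

theory Submission imports Defs "HOL-Real_Asymp.Real_Asymp" begin

lemma poisson_add:
  assumes "a > 0" "b > 0"
  shows "map_pmf (\<lambda>(x,y). x + y) (pair_pmf (poisson_pmf a) (poisson_pmf b)) = poisson_pmf (a + b)"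
proof (rule pmf_eqI)
  fix n :: nat
  have pre: "(\<lambda>(x::nat,y). x + y) -` {n} = (\<lambda>k. (k, n - k)) ` {..n}"
    by (force simp: image_iff)
  have inj: "inj_on (\<lambda>k. (k, n - k)) {..n}" by (auto simp: inj_on_def)
  have "pmf (map_pmf (\<lambda>(x,y). x + y) (pair_pmf (poisson_pmf a) (poisson_pmf b))) n
      = (\<Sum>k\<le>n. pmf (poisson_pmf a) k * pmf (poisson_pmf b) (n - k))"
    unfolding pmf_map pre
    by (subst measure_measure_pmf_finite) (simp_all add: sum.reindex[OF inj] pmf_pair)
  also have "\<dots> = (\<Sum>k\<le>n. a ^ k / fact k * exp (-a) * (b ^ (n-k) / fact (n-k) * exp (-b)))"
    using assms by simp
  also have "\<dots> = exp (-(a+b)) / fact n * (\<Sum>k\<le>n. real (n choose k) * a ^ k * b ^ (n-k))"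
    unfolding sum_distrib_left
  proof (rule sum.cong[OF refl])
    fix k assume k: "k \<in> {..n}"
    have "real (n choose k) = fact n / (fact k * fact (n - k))"
      using k by (simp add: binomial_fact)
    moreover have "exp (-(a+b)) = exp (-a) * exp (-b)" by (simp add: exp_add[symmetric])
    ultimately show "a ^ k / fact k * exp (-a) * (b ^ (n-k) / fact (n-k) * exp (-b))
       = exp (-(a+b)) / fact n * (real (n choose k) * a ^ k * b ^ (n-k))"
      by (simp add: field_simps)
  qed
  also have "(\<Sum>k\<le>n. real (n choose k) * a ^ k * b ^ (n-k)) = (a + b) ^ n"
    by (simp add: binomial_ring atLeast0AtMost)
  also have "exp (-(a+b)) / fact n * (a + b) ^ n = pmf (poisson_pmf (a+b)) n"
    using assms by simp
  finally show "pmf (map_pmf (\<lambda>(x,y). x + y) (pair_pmf (poisson_pmf a) (poisson_pmf b))) n = pmf (poisson_pmf (a+b)) n" .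
qed


lemma poisson_sum_Pi:
  assumes "finite J" "J \<noteq> {}" "\<theta> > 0"
  shows "map_pmf (\<lambda>w. \<Sum>j\<in>J. w j) (Pi_pmf J d (\<lambda>_. poisson_pmf \<theta>)) = poisson_pmf (real (card J) * \<theta>)"
  using assms(1,2)
proof (induction J rule: finite_ne_induct)
  case (singleton x)
  show ?case by (simp add: Pi_pmf_singleton pmf.map_comp o_def)
next
  case (insert x F)
  have "map_pmf (\<lambda>w. \<Sum>j\<in>insert x F. w j) (Pi_pmf (insert x F) d (\<lambda>_. poisson_pmf \<theta>))
     = map_pmf (\<lambda>(y,f). y + (\<Sum>j\<in>F. f j)) (pair_pmf (poisson_pmf \<theta>) (Pi_pmf F d (\<lambda>_. poisson_pmf \<theta>)))"
    using insert by (subst Pi_pmf_insert) (auto simp: pmf.map_comp o_def case_prod_unfold intro!: pmf.map_cong sum.cong)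
  also have "\<dots> = map_pmf (\<lambda>(x,y). x + y) (pair_pmf (poisson_pmf \<theta>) (map_pmf (\<lambda>w. \<Sum>j\<in>F. w j) (Pi_pmf F d (\<lambda>_. poisson_pmf \<theta>))))"
    by (simp add: pair_map_pmf2 pmf.map_comp o_def case_prod_unfold)
  also have "\<dots> = poisson_pmf (\<theta> + real (card F) * \<theta>)"
    using insert assms(3) poisson_add[of \<theta> "real (card F) * \<theta>"] by (simp add: card_gt_0_iff)
  also have "\<theta> + real (card F) * \<theta> = real (card (insert x F)) * \<theta>"
    using insert by (simp add: algebra_simps)
  finally show ?case .
qed

lemma curry_Pi_pmf:
  assumes "finite I" "finite J"
  shows "map_pmf (\<lambda>z a b. z (a,b)) (Pi_pmf (I \<times> J) d p) = Pi_pmf I (\<lambda>_. d) (\<lambda>a. Pi_pmf J d (\<lambda>b. p (a,b)))"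
proof (rule pmf_eqI)
  fix F :: "'a \<Rightarrow> 'b \<Rightarrow> 'c"
  have inj: "inj (\<lambda>z a b. z (a,b))" by (auto simp: inj_def fun_eq_iff)
  have F: "F = (\<lambda>z a b. z (a,b)) (case_prod F)" by simp
  have "pmf (map_pmf (\<lambda>z a b. z (a,b)) (Pi_pmf (I \<times> J) d p)) F = pmf (Pi_pmf (I \<times> J) d p) (case_prod F)"
    by (subst F, subst pmf_map_inj'[OF inj]) simp
  also have "\<dots> = pmf (Pi_pmf I (\<lambda>_. d) (\<lambda>a. Pi_pmf J d (\<lambda>b. p (a,b)))) F"
  proof (cases "\<forall>a. a \<notin> I \<longrightarrow> F a = (\<lambda>_. d)")
    case True
    show ?thesis
    proof (cases "\<forall>a\<in>I. \<forall>b. b \<notin> J \<longrightarrow> F a b = d")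
      case True2: True
      have "pmf (Pi_pmf (I \<times> J) d p) (case_prod F) = (\<Prod>x\<in>I \<times> J. pmf (p x) (case_prod F x))"
        using True True2 assms by (subst pmf_Pi) (auto simp: fun_eq_iff)
      also have "\<dots> = (\<Prod>a\<in>I. \<Prod>b\<in>J. pmf (p (a,b)) (F a b))"
        unfolding prod.cartesian_product by (intro prod.cong) auto
      also have "\<dots> = pmf (Pi_pmf I (\<lambda>_. d) (\<lambda>a. Pi_pmf J d (\<lambda>b. p (a,b)))) F"
        using True True2 assms by (subst pmf_Pi) (auto simp: pmf_Pi intro!: prod.cong)
      finally show ?thesis .
    next
      case False
      then obtain a b where ab: "a \<in> I" "b \<notin> J" "F a b \<noteq> d" by auto
      have "pmf (Pi_pmf (I \<times> J) d p) (case_prod F) = 0"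
        using ab assms by (intro pmf_Pi_outside) auto
      moreover have "pmf (Pi_pmf I (\<lambda>_. d) (\<lambda>a. Pi_pmf J d (\<lambda>b. p (a,b)))) F = 0"
        using True ab assms by (subst pmf_Pi) (auto intro!: prod_zero bexI[of _ a] pmf_Pi_outside)
      ultimately show ?thesis by simp
    qed
  next
    case False
    then obtain a where a: "a \<notin> I" "F a \<noteq> (\<lambda>_. d)" by auto
    then obtain b where "F a b \<noteq> d" by auto
    then have "pmf (Pi_pmf (I \<times> J) d p) (case_prod F) = 0"
      using a assms by (intro pmf_Pi_outside) auto
    moreover have "pmf (Pi_pmf I (\<lambda>_. d) (\<lambda>a. Pi_pmf J d (\<lambda>b. p (a,b)))) F = 0"
      using a assms by (intro pmf_Pi_outside) auto
    ultimately show ?thesis by simp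
  qed
  finally show "pmf (map_pmf (\<lambda>z a b. z (a,b)) (Pi_pmf (I \<times> J) d p)) F = pmf (Pi_pmf I (\<lambda>_. d) (\<lambda>a. Pi_pmf J d (\<lambda>b. p (a,b)))) F" .
qed


lemma st_char:
  "seq_thresh n m thr y K = {i \<in> {1..n}. \<forall>k\<in>{1..K}. (\<Sum>j=1..m. y (k,i,j)) < thr}"
proof (induction K)
  case 0 then show ?case by auto
next
  case (Suc K)
  show ?case by (auto simp: Suc le_Suc_eq)
qed

lemma prob_row:
  fixes n m i thr :: nat and S :: "nat set"
  assumes "i \<in> {1..n}" "m \<ge> 1" "\<theta>0 > 0" "\<theta>1 > 0"
  shows "measure_pmf.prob (Pi_pmf ({1..n} \<times> {1..m}) 0 (\<lambda>(i, j). poisson_pmf (if i \<in> S then \<theta>1 else \<theta>0)))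
           {w. (\<Sum>j=1..m. w (i,j)) < thr}
         = measure_pmf.prob (poisson_pmf (real m * (if i \<in> S then \<theta>1 else \<theta>0))) {..<thr}"
proof -
  let ?q = "Pi_pmf ({1..n} \<times> {1..m}) 0 (\<lambda>(i, j). poisson_pmf (if i \<in> S then \<theta>1 else \<theta>0))"
  let ?t = "if i \<in> S then \<theta>1 else \<theta>0"
  have "measure_pmf.prob ?q {w. (\<Sum>j=1..m. w (i,j)) < thr}
     = measure_pmf.prob (map_pmf (\<lambda>z a b. z (a,b)) ?q) {G. (\<Sum>j=1..m. G i j) < thr}"
    by simp
  also have "map_pmf (\<lambda>z a b. z (a,b)) ?q = Pi_pmf {1..n} (\<lambda>_. 0) (\<lambda>a. Pi_pmf {1..m} 0 (\<lambda>b. poisson_pmf (if a \<in> S then \<theta>1 else \<theta>0)))"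
    by (subst curry_Pi_pmf) auto
  also have "measure_pmf.prob \<dots> {G. (\<Sum>j=1..m. G i j) < thr}
     = measure_pmf.prob (map_pmf (\<lambda>G. G i) \<dots>) {w. (\<Sum>j=1..m. w j) < thr}"
    by simp
  also have "map_pmf (\<lambda>G. G i) (Pi_pmf {1..n} (\<lambda>_. 0) (\<lambda>a. Pi_pmf {1..m} 0 (\<lambda>b. poisson_pmf (if a \<in> S then \<theta>1 else \<theta>0))))
     = Pi_pmf {1..m} 0 (\<lambda>_. poisson_pmf ?t)"
    using assms(1) by (simp add: Pi_pmf_component[OF finite_atLeastAtMost])
  also have "measure_pmf.prob \<dots> {w. (\<Sum>j=1..m. w j) < thr}
     = measure_pmf.prob (map_pmf (\<lambda>w. \<Sum>j\<in>{1..m}. w j) (Pi_pmf {1..m} 0 (\<lambda>_. poisson_pmf ?t))) {..<thr}"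
    by (simp add: vimage_def)
  also have "map_pmf (\<lambda>w. \<Sum>j\<in>{1..m}. w j) (Pi_pmf {1..m} 0 (\<lambda>_. poisson_pmf ?t)) = poisson_pmf (real (card {1..m}) * ?t)"
    using assms by (intro poisson_sum_Pi) auto
  finally show ?thesis by simp
qed

lemma prob_keep:
  fixes n m i thr K :: nat and S :: "nat set"
  assumes "i \<in> {1..n}" "m \<ge> 1" "\<theta>0 > 0" "\<theta>1 > 0"
  shows "measure_pmf.prob (obs_pmf n m K S \<theta>0 \<theta>1) {y. i \<in> seq_thresh n m thr y K}
       = (measure_pmf.prob (poisson_pmf (real m * (if i \<in> S then \<theta>1 else \<theta>0))) {..<thr}) ^ K"
proof -
  let ?p = "\<lambda>(k::nat, i, j::nat). poisson_pmf (if i \<in> S then \<theta>1 else \<theta>0)"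
  let ?B = "{w. (\<Sum>j=1..m. w (i,j)) < thr}"
  have "{y. i \<in> seq_thresh n m thr y K} = (\<lambda>z a b. z (a,b)) -` Pi {1..K} (\<lambda>_. ?B)"
    using assms(1) by (auto simp: st_char)
  then have "measure_pmf.prob (obs_pmf n m K S \<theta>0 \<theta>1) {y. i \<in> seq_thresh n m thr y K}
      = measure_pmf.prob (map_pmf (\<lambda>z a b. z (a,b)) (Pi_pmf ({1..K} \<times> ({1..n} \<times> {1..m})) 0 ?p)) (Pi {1..K} (\<lambda>_. ?B))"
    by (simp add: obs_pmf_def)
  also have "map_pmf (\<lambda>z a b. z (a,b)) (Pi_pmf ({1..K} \<times> ({1..n} \<times> {1..m})) 0 ?p)
     = Pi_pmf {1..K} (\<lambda>_. 0) (\<lambda>a. Pi_pmf ({1..n} \<times> {1..m}) 0 (\<lambda>b. ?p (a,b)))"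
    by (subst curry_Pi_pmf) auto
  also have "measure_pmf.prob \<dots> (Pi {1..K} (\<lambda>_. ?B)) = (\<Prod>k\<in>{1..K}. measure_pmf.prob (Pi_pmf ({1..n} \<times> {1..m}) 0 (\<lambda>b. ?p (k,b))) ?B)"
    by (subst measure_Pi_pmf_Pi) auto
  also have "\<dots> = (\<Prod>k\<in>{1..K}. measure_pmf.prob (poisson_pmf (real m * (if i \<in> S then \<theta>1 else \<theta>0))) {..<thr})"
    using prob_row[OF assms, of S thr] by (intro prod.cong) (auto simp: case_prod_unfold)
  finally show ?thesis by simp
qed


lemma poisson_prob_lessThan:
  assumes "r > 0"
  shows "measure_pmf.prob (poisson_pmf r) {..<M} = exp (-r) * (\<Sum>k<M. r ^ k / fact k)"
  using assms by (simp add: measure_measure_pmf_finite sum_distrib_left mult_ac)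

lemma poisson_upper_tail:
  assumes "r > 0"
  shows "1 - measure_pmf.prob (poisson_pmf r) {..<M} \<le> r ^ M / fact M"
proof -
  obtain t where t: "\<bar>t\<bar> \<le> \<bar>r\<bar>" "exp r = (\<Sum>k<M. r ^ k / fact k) + exp t / fact M * r ^ M"
    using Maclaurin_exp_le[of r M] by blast
  have "exp t \<le> exp r" using t(1) assms by simp
  have "1 - measure_pmf.prob (poisson_pmf r) {..<M} = exp (-r) * (exp r - (\<Sum>k<M. r ^ k / fact k))"
    using assms by (simp add: poisson_prob_lessThan algebra_simps exp_minus)
  also have "\<dots> = exp (-r) * exp t * (r ^ M / fact M)" using t(2) by simp
  also have "\<dots> \<le> exp (-r) * exp r * (r ^ M / fact M)"
    using \<open>exp t \<le> exp r\<close> assms by (intro mult_right_mono mult_left_mono) auto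
  also have "\<dots> = r ^ M / fact M" by (simp add: exp_minus)
  finally show ?thesis .
qed

lemma null_le_half:
  assumes "r > 0"
  shows "measure_pmf.prob (poisson_pmf r) {..<poisson_median r} \<le> 1/2"
proof (cases "poisson_median r = 0")
  case True then show ?thesis by simp
next
  case False
  then have "poisson_median r - 1 < poisson_median r" by simp
  then have "\<not> measure_pmf.prob (poisson_pmf r) {..poisson_median r - 1} \<ge> 1/2"
    unfolding poisson_median_def by (rule not_less_Least)
  moreover have "{..<poisson_median r} = {..poisson_median r - 1}" using False by auto
  ultimately show ?thesis by simp
qed

lemma exp_partial_le:
  fixes x :: real
  assumes "x \<ge> 0"
  shows "(\<Sum>k<N. x ^ k / fact k) \<le> exp x"
proof -
  obtain t where t: "exp x = (\<Sum>k<N. x ^ k / fact k) + exp t / fact N * x ^ N"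
    using Maclaurin_exp_le[of x N] by blast
  have "exp t / fact N * x ^ N \<ge> 0" using assms by simp
  then show ?thesis using t by linarith
qed

lemma median_lb:
  assumes "r > 0"
  shows "exp (r / 2) \<le> 2 ^ (poisson_median r + 1)"
proof -
  let ?P = "\<lambda>M. measure_pmf.prob (poisson_pmf r) {..M} \<ge> 1/2"
  have "(\<lambda>N. r ^ N / fact N) \<longlonglongrightarrow> 0"
    using summable_exp[of r] by (intro summable_LIMSEQ_zero) (simp add: inverse_eq_divide field_simps)
  from LIMSEQ_D[OF this, of "1/2"] obtain N where "norm (r ^ N / fact N - 0) < 1/2" by auto
  then have N: "r ^ N / fact N \<le> 1/2" by simp
  have "?P N"
  proof -
    have "measure_pmf.prob (poisson_pmf r) {..<N} \<le> measure_pmf.prob (poisson_pmf r) {..N}"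
      by (intro measure_pmf.finite_measure_mono) auto
    then show ?thesis using poisson_upper_tail[OF assms, of N] N by linarith
  qed
  then have P: "?P (poisson_median r)" unfolding poisson_median_def by (rule LeastI)
  define M where "M = poisson_median r"
  have eq: "measure_pmf.prob (poisson_pmf r) {..M} = exp (-r) * (\<Sum>k<Suc M. r ^ k / fact k)"
    using poisson_prob_lessThan[OF assms, of "Suc M"] by (simp add: lessThan_Suc_atMost)
  have "(\<Sum>k<Suc M. r ^ k / fact k) \<le> (\<Sum>k<Suc M. 2 ^ M * ((r/2) ^ k / fact k))"
  proof (intro sum_mono)
    fix k assume "k \<in> {..<Suc M}"
    then have k2: "(2::real) ^ k \<le> 2 ^ M" by (intro power_increasing) auto
    moreover have "r ^ k / fact k = 2 ^ k * ((r/2) ^ k / fact k)" by (simp add: power_divide)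
    moreover have "(r/2) ^ k / fact k \<ge> 0" using assms by simp
    ultimately show "r ^ k / fact k \<le> 2 ^ M * ((r/2) ^ k / fact k)"
      using mult_right_mono[OF k2, of "(r/2) ^ k / fact k"] by simp
  qed
  also have "\<dots> = 2 ^ M * (\<Sum>k<Suc M. (r/2) ^ k / fact k)" by (rule sum_distrib_left[symmetric])
  also have "\<dots> \<le> 2 ^ M * exp (r/2)" using assms by (intro mult_left_mono exp_partial_le) auto
  finally have sb: "(\<Sum>k<Suc M. r ^ k / fact k) \<le> 2 ^ M * exp (r/2)" .
  have sb2: "exp (-r) * (\<Sum>k<Suc M. r ^ k / fact k) \<le> exp (-r) * (2 ^ M * exp (r/2))"
    by (rule mult_left_mono[OF sb]) simp
  have "1/2 \<le> exp (-r) * (2 ^ M * exp (r/2))"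
    using P[folded M_def] eq sb2 by linarith
  moreover have "exp (-r) = inverse (exp (r/2) * exp (r/2))"
    by (simp add: exp_minus exp_add[symmetric])
  ultimately have h: "1/2 \<le> 2 ^ M / exp (r/2)"
    by (simp add: field_simps)
  have "exp (r/2) > 0" by simp
  then have "exp (r/2) \<le> 2 * 2 ^ M" using h by (simp add: field_simps)
  then show ?thesis unfolding M_def by simp
qed


lemma main_bound:
  fixes n m K :: nat and S :: "nat set"
  assumes "m \<ge> 1" "\<theta>0 > 0" "\<theta>1 > 0" "S \<subseteq> {1..n}"
  defines "M \<equiv> poisson_median (real m * \<theta>0)"
  shows "measure_pmf.prob (obs_pmf n m K S \<theta>0 \<theta>1) {y. seq_thresh n m M y K \<noteq> S}
     \<le> real n * (1/2) ^ K + real (card S) * real K * ((real m * \<theta>1) ^ M / fact M)"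
proof -
  let ?P = "obs_pmf n m K S \<theta>0 \<theta>1"
  let ?E = "\<lambda>i. {y. (i \<in> seq_thresh n m M y K) \<noteq> (i \<in> S)}"
  have mpos: "real m > 0" using assms by simp
  have sub: "{y. seq_thresh n m M y K \<noteq> S} \<subseteq> (\<Union>i\<in>{1..n}. ?E i)"
  proof
    fix y assume "y \<in> {y. seq_thresh n m M y K \<noteq> S}"
    then obtain i where "(i \<in> seq_thresh n m M y K) \<noteq> (i \<in> S)" by blast
    moreover then have "i \<in> {1..n}" using assms(4) by (auto simp: st_char)
    ultimately show "y \<in> (\<Union>i\<in>{1..n}. ?E i)" by blast
  qed
  have "measure_pmf.prob ?P {y. seq_thresh n m M y K \<noteq> S} \<le> measure_pmf.prob ?P (\<Union>i\<in>{1..n}. ?E i)"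
    using sub by (intro measure_pmf.finite_measure_mono) auto
  also have "\<dots> \<le> (\<Sum>i\<in>{1..n}. measure_pmf.prob ?P (?E i))"
    by (intro measure_pmf.finite_measure_subadditive_finite) auto
  also have "\<dots> = (\<Sum>i\<in>{1..n} - S. measure_pmf.prob ?P (?E i)) + (\<Sum>i\<in>S. measure_pmf.prob ?P (?E i))"
    using assms(4) by (subst sum.subset_diff[of S]) auto
  also have "(\<Sum>i\<in>{1..n} - S. measure_pmf.prob ?P (?E i)) \<le> (\<Sum>i\<in>{1..n} - S. (1/2) ^ K)"
  proof (intro sum_mono)
    fix i assume i: "i \<in> {1..n} - S"
    then have "measure_pmf.prob ?P (?E i) = measure_pmf.prob ?P {y. i \<in> seq_thresh n m M y K}" by simp
    also have "\<dots> = (measure_pmf.prob (poisson_pmf (real m * \<theta>0)) {..<M}) ^ K"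
      using prob_keep[of i n m \<theta>0 \<theta>1 K S M] i assms by simp
    also have "\<dots> \<le> (1/2) ^ K"
      unfolding M_def using null_le_half[of "real m * \<theta>0"] mpos assms(2)
      by (intro power_mono) auto
    finally show "measure_pmf.prob ?P (?E i) \<le> (1/2) ^ K" .
  qed
  also have "(\<Sum>i\<in>{1..n} - S. (1/2::real) ^ K) \<le> real n * (1/2) ^ K"
    by (simp add: card_Diff_subset_Int)
  also have "(\<Sum>i\<in>S. measure_pmf.prob ?P (?E i)) \<le> (\<Sum>i\<in>S. real K * ((real m * \<theta>1) ^ M / fact M))"
  proof (intro sum_mono)
    fix i assume i: "i \<in> S"
    let ?r = "measure_pmf.prob (poisson_pmf (real m * \<theta>1)) {..<M}"
    have "?E i = space ?P - {y. i \<in> seq_thresh n m M y K}" using i by auto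
    then have "measure_pmf.prob ?P (?E i) = 1 - measure_pmf.prob ?P {y. i \<in> seq_thresh n m M y K}"
      using measure_pmf.prob_compl[of "{y. i \<in> seq_thresh n m M y K}" ?P] by simp
    also have "\<dots> = 1 - ?r ^ K"
      using prob_keep[of i n m \<theta>0 \<theta>1 K S M] i assms by auto
    also have "\<dots> \<le> real K * (1 - ?r)"
      using Bernoulli_inequality[of "-(1 - ?r)" K] measure_pmf.prob_le_1[of _ "{..<M}"]
        measure_nonneg[of _ "{..<M}"] by (simp add: algebra_simps)
    also have "\<dots> \<le> real K * ((real m * \<theta>1) ^ M / fact M)"
      using poisson_upper_tail[of "real m * \<theta>1" M] mpos assms(3)
      by (intro mult_left_mono) auto
    finally show "measure_pmf.prob ?P (?E i) \<le> real K * ((real m * \<theta>1) ^ M / fact M)" .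
  qed
  also have "(\<Sum>i\<in>S. real K * ((real m * \<theta>1) ^ M / fact M)) = real (card S) * real K * ((real m * \<theta>1) ^ M / fact M)"
    by simp
  finally show ?thesis by simp
qed


lemma half_pow_bound:
  fixes n :: nat and \<epsilon> :: real
  assumes "n \<ge> 1" "\<epsilon> > 0"
  shows "(1/2::real) ^ nat \<lceil>(1 + \<epsilon>) * log 2 (real n)\<rceil> \<le> real n powr (-(1+\<epsilon>))"
proof -
  let ?x = "(1 + \<epsilon>) * log 2 (real n)"
  have x0: "?x \<ge> 0" using assms by simp
  have Kx: "real (nat \<lceil>?x\<rceil>) \<ge> ?x" using x0 by linarith
  have "(1/2::real) ^ nat \<lceil>?x\<rceil> = 2 powr (- real (nat \<lceil>?x\<rceil>))"
    by (simp add: powr_minus powr_realpow power_one_over inverse_eq_divide)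
  also have "\<dots> \<le> 2 powr (- ?x)" using Kx by (intro powr_mono) auto
  also have "2 powr (- ?x) = (2 powr log 2 (real n)) powr (-(1+\<epsilon>))"
    by (simp add: powr_powr algebra_simps)
  also have "\<dots> = real n powr (-(1+\<epsilon>))" using assms by simp
  finally show ?thesis .
qed

lemma sig_bound:
  fixes n m :: nat and s :: nat and \<epsilon> lam :: real
  assumes "n \<ge> 2" "\<epsilon> > 0" "s \<ge> 1" "lam > ln (real s * log 2 (real n)) + 1" "lam > 0"
  shows "real s * real (nat \<lceil>(1 + \<epsilon>) * log 2 (real n)\<rceil>) \<le> 4 * (2 + \<epsilon>) * 4 ^ poisson_median lam"
proof -
  let ?L = "log 2 (real n)"
  have L1: "?L \<ge> 1" using assms(1) by simp
  have x0: "(1 + \<epsilon>) * ?L \<ge> 0" using L1 assms(2) by simp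
  then have "real (nat \<lceil>(1 + \<epsilon>) * ?L\<rceil>) = real_of_int \<lceil>(1 + \<epsilon>) * ?L\<rceil>" by simp
  then have "real (nat \<lceil>(1 + \<epsilon>) * ?L\<rceil>) \<le> (1 + \<epsilon>) * ?L + 1"
    using ceiling_correct[of "(1 + \<epsilon>) * ?L"] by linarith
  also have "\<dots> \<le> (2 + \<epsilon>) * ?L" using L1 by (simp add: algebra_simps)
  finally have K: "real (nat \<lceil>(1 + \<epsilon>) * ?L\<rceil>) \<le> (2 + \<epsilon>) * ?L" .
  have sLpos: "real s * ?L > 0" using L1 assms(3) by simp
  have "real s * ?L = exp (ln (real s * ?L))" using sLpos by simp
  also have "\<dots> \<le> exp lam" using assms(4) by simp
  also have "exp lam = exp (lam/2) * exp (lam/2)" by (simp add: exp_add[symmetric])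
  also have "\<dots> \<le> 2 ^ (poisson_median lam + 1) * 2 ^ (poisson_median lam + 1)"
    using median_lb[OF assms(5)] by (intro mult_mono) auto
  also have "\<dots> = 4 * 4 ^ poisson_median lam"
    by (simp add: power_add power_mult_distrib[symmetric])
  finally have sL: "real s * ?L \<le> 4 * 4 ^ poisson_median lam" .
  have "real s * real (nat \<lceil>(1 + \<epsilon>) * ?L\<rceil>) \<le> real s * ((2 + \<epsilon>) * ?L)"
    using K by (intro mult_left_mono) auto
  also have "\<dots> = (2 + \<epsilon>) * (real s * ?L)" by simp
  also have "\<dots> \<le> (2 + \<epsilon>) * (4 * 4 ^ poisson_median lam)"
    using sL assms(2) by (intro mult_left_mono) auto
  finally show ?thesis by (simp add: algebra_simps)
qed

lemma median_grows:
  assumes "lam > 0" "lam > 2 * ln 2 * (real Z + 1)"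
  shows "poisson_median lam \<ge> Z"
proof -
  have "lam / 2 \<le> ln (2 ^ (poisson_median lam + 1))"
    using median_lb[OF assms(1)] by (subst ln_ge_iff) auto
  also have "\<dots> = real (poisson_median lam + 1) * ln 2" by (simp only: ln_realpow)
  finally have h: "lam / 2 \<le> real (poisson_median lam + 1) * ln 2" .
  have "(real Z + 1) * ln 2 < real (poisson_median lam + 1) * ln 2"
  proof -
    have e: "(real Z + 1) * ln 2 = (2 * ln 2 * (real Z + 1)) / 2" by (simp add: algebra_simps)
    show ?thesis using h assms(2) unfolding e by linarith
  qed
  then have "real Z + 1 < real (poisson_median lam + 1)"
    using ln_gt_zero[of "2::real"] by (simp only: mult_less_cancel_right) simp
  then show ?thesis by simp
qed


theorem corollary6:
  fixes m :: nat and \<epsilon> :: real and \<theta>1 :: real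
    and \<theta>0 :: "nat \<Rightarrow> real" and S :: "nat \<Rightarrow> nat set"
  assumes m_pos: "m \<ge> 1"
    and eps_pos: "\<epsilon> > 0"
    and theta1_pos: "\<theta>1 > 0"
    and theta0_gt: "\<And>n. \<theta>0 n > \<theta>1"
    and S_sub: "\<And>n. S n \<subseteq> {1..n}"
    and growth: "eventually (\<lambda>n. \<theta>0 n > (ln (real (card (S n)) * log 2 (real n)) + 1) / real m) at_top"
  shows "(\<lambda>n. let K = nat \<lceil>(1 + \<epsilon>) * log 2 (real n)\<rceil> in
            measure_pmf.prob (obs_pmf n m K (S n) (\<theta>0 n) \<theta>1)
              {y. seq_thresh n m (poisson_median (real m * \<theta>0 n)) y K \<noteq> S n})
         \<longlonglongrightarrow> 0"
proof -
  define f where "f = (\<lambda>n. let K = nat \<lceil>(1 + \<epsilon>) * log 2 (real n)\<rceil> in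
            measure_pmf.prob (obs_pmf n m K (S n) (\<theta>0 n) \<theta>1)
              {y. seq_thresh n m (poisson_median (real m * \<theta>0 n)) y K \<noteq> S n})"
  define \<mu> where "\<mu> = real m * \<theta>1"
  define Mn where "Mn = (\<lambda>n. poisson_median (real m * \<theta>0 n))"
  define M' where "M' = (\<lambda>n. if card (S n) = 0 then n else Mn n)"
  define C where "C = 4 * (2 + \<epsilon>)"
  define a where "a = (\<lambda>M::nat. (4 * \<mu>) ^ M / fact M)"
  define g where "g = (\<lambda>n::nat. real n * real n powr (-(1+\<epsilon>)) + C * a (M' n))"
  have mpos: "real m > 0" using m_pos by simp
  have th0pos: "\<theta>0 n > 0" for n using theta0_gt[of n] theta1_pos by linarith
  have lampos: "real m * \<theta>0 n > 0" for n using mpos th0pos[of n] by simp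
  have mupos: "\<mu> > 0" using mpos theta1_pos by (simp add: \<mu>_def)
  from growth obtain N0 where N0: "\<And>n. n \<ge> N0 \<Longrightarrow> \<theta>0 n > (ln (real (card (S n)) * log 2 (real n)) + 1) / real m"
    by (auto simp: eventually_at_top_linorder)
  have lam_gt: "real m * \<theta>0 n > ln (real (card (S n)) * log 2 (real n)) + 1" if "n \<ge> N0" for n
    using N0[OF that] mpos by (simp add: field_simps)
  have bound: "f n \<le> g n" if n: "n \<ge> max 2 N0" for n
  proof -
    let ?K = "nat \<lceil>(1 + \<epsilon>) * log 2 (real n)\<rceil>"
    have "f n \<le> real n * (1/2) ^ ?K + real (card (S n)) * real ?K * (\<mu> ^ Mn n / fact (Mn n))"
      unfolding f_def Let_def \<mu>_def Mn_def
      using main_bound[OF m_pos th0pos theta1_pos S_sub, of n ?K] by simp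
    also have "real n * (1/2) ^ ?K \<le> real n * real n powr (-(1+\<epsilon>))"
      using half_pow_bound[of n \<epsilon>] n eps_pos by (intro mult_left_mono) auto
    also have "real (card (S n)) * real ?K * (\<mu> ^ Mn n / fact (Mn n)) \<le> C * a (M' n)"
    proof (cases "card (S n) = 0")
      case True
      then show ?thesis using mupos by (simp add: C_def a_def eps_pos less_imp_le)
    next
      case False
      have sK: "real (card (S n)) * real ?K \<le> C * 4 ^ Mn n"
        unfolding C_def Mn_def
        using sig_bound[of n \<epsilon> "card (S n)" "real m * \<theta>0 n"] n eps_pos False lam_gt[of n] lampos[of n]
        by simp
      have "real (card (S n)) * real ?K * (\<mu> ^ Mn n / fact (Mn n)) \<le> C * 4 ^ Mn n * (\<mu> ^ Mn n / fact (Mn n))"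
        using sK mupos by (intro mult_right_mono) auto
      also have "\<dots> = C * a (M' n)"
        using False by (simp add: a_def M'_def power_mult_distrib)
      finally show ?thesis .
    qed
    finally show ?thesis by (simp add: g_def)
  qed
  have a_lim: "a \<longlonglongrightarrow> 0"
    unfolding a_def using summable_exp[of "4 * \<mu>"]
    by (intro summable_LIMSEQ_zero) (simp add: inverse_eq_divide field_simps)
  have ln_lim: "filterlim (\<lambda>n::nat. ln (log 2 (real n))) at_top sequentially"
    by real_asymp
  have M'_lim: "filterlim M' at_top sequentially"
  proof (subst filterlim_at_top, intro allI)
    fix Z :: nat
    have ev1: "eventually (\<lambda>n. ln (log 2 (real n)) \<ge> 2 * ln 2 * (real Z + 1)) sequentially"
      using ln_lim by (simp add: filterlim_at_top)
    have ev2: "eventually (\<lambda>n. n \<ge> max (max 2 N0) Z) sequentially"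
      by (rule eventually_ge_at_top)
    show "eventually (\<lambda>n. Z \<le> M' n) sequentially"
      using ev1 ev2
    proof eventually_elim
      case (elim n)
      show ?case
      proof (cases "card (S n) = 0")
        case True then show ?thesis using elim by (simp add: M'_def)
      next
        case False
        have L: "log 2 (real n) > 0" using elim by simp
        have "ln (real (card (S n)) * log 2 (real n)) \<ge> ln (log 2 (real n))"
          using False L by (subst ln_le_cancel_iff) auto
        then have "real m * \<theta>0 n > 2 * ln 2 * (real Z + 1)"
          using lam_gt[of n] elim by linarith
        then show ?thesis using False median_grows[OF lampos[of n]] by (simp add: M'_def Mn_def)
      qed
    qed
  qed
  have aM: "(\<lambda>n. a (M' n)) \<longlonglongrightarrow> 0"
    using filterlim_compose[OF a_lim M'_lim] by simp
  have g_lim: "g \<longlonglongrightarrow> 0"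
  proof -
    have "(\<lambda>n::nat. real n * real n powr (-(1+\<epsilon>))) \<longlonglongrightarrow> 0"
      using eps_pos by real_asymp
    moreover have "(\<lambda>n. C * a (M' n)) \<longlonglongrightarrow> 0"
      using tendsto_mult_right_zero[OF aM] by simp
    ultimately show ?thesis unfolding g_def by (rule tendsto_add_zero)
  qed
  have "f \<longlonglongrightarrow> 0"
  proof (rule tendsto_sandwich[of "\<lambda>_. 0" f sequentially g])
    show "eventually (\<lambda>n. 0 \<le> f n) sequentially"
      by (simp add: f_def Let_def)
    show "eventually (\<lambda>n. f n \<le> g n) sequentially"
      using bound by (intro eventually_sequentiallyI[of "max 2 N0"]) auto
  qed (auto intro: g_lim)
  then show ?thesis unfolding f_def .
qed

end
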